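(* Let $T$ be a DAT with duration vector $d$, and let $v$ be a module of $T$. Let $T^v$ be the DAT obtained from $T$ by deleting all nodes of $T_v$ other than $v$ (together with their incident edges) and turning $v$ into a new leaf $\tilde v$ of type $\mathtt{BAS}$ (keeping its incoming edges and its position in the child orderings of its $\mathtt{SAND}$-parents). Define the duration vector $d^v$ on the BASes of $T^v$ by $d^v_a=d_a$ for $a\in N_{\mathtt{BAS}}\setminus B_v$ and $d^v_{\tilde v}=\mathrm{mt}(T_v,d|_{B_v})$ (where, if this value is $\infty$, one uses the convention that $\mathrm{t}(\mathcal{O},d^v)=\infty$ for any attack $\mathcal{O}$ containing $\tilde v$). Then $$\mathrm{mt}(T,d)=\mathrm{mt}(T^v,d^v).$$
   Context: A dynamic attack tree (DAT) is a finite rooted directed acyclic graph $T=(N,E)$ (edges point from a node to its children) with root $\mathrm{R}_T$, in which each node $v$ has a type $\gamma(v)\in\{\mathtt{BAS},\mathtt{OR},\mathtt{AND},\mathtt{SAND}\}$, with $\gamma(v)=\mathtt{BAS}$ if and only if $v$ is a leaf. Every node of type $\mathtt{SAND}$ comes with a fixed linear ordering $v_1,\dots,v_n$ of its children, written $v=\mathtt{SAND}(v_1,\dots,v_n)$; similarly one writes $v=\mathtt{OR}(v_1,\dots,v_n)$, $v=\mathtt{AND}(v_1,\dots,v_n)$. $N_\gamma$ denotes the set of nodes of type $\gamma$. For a node $v$, $T_v$ is the sub-DAG induced on the descendants of $v$ (all nodes reachable from $v$ by a directed path, including $v$), rooted at $v$, with the inherited types and orderings, and $B_v$ is the set of nodes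 of $T_v$ of type $\mathtt{BAS}$. A module of $T$ is a node $v\in N\setminus N_{\mathtt{BAS}}$ such that every directed path from a node outside $T_v$ to a node of $T_v$ passes through $v$; equivalently, every node of $T_v$ other than $v$ has all its parents inside $T_v$. An attack on $T$ is a pair $\mathcal{O}=(A,\prec)$ where $A\subseteq N_{\mathtt{BAS}}$ and $\prec$ is a strict partial order on $A$. An attack $(A,\prec)$ reaches a node $v$, defined recursively: if $v\in N_{\mathtt{BAS}}$, iff $v\in A$; if $v=\mathtt{OR}(v_1,\dots,v_n)$, iff it reaches some $v_i$; if $v=\mathtt{AND}(v_1,\dots,v_n)$, iff it reaches all $v_i$; if $v=\mathtt{SAND}(v_1,\dots,v_n)$, iff it reaches all $v_i$ and for every $i<n$, every $a\in A\cap B_{v_i}$ and every $a'\in A\cap B_{v_{i+1}}$ one has $a\prec a'$. An attack is successful if it reaches $\mathrm{R}_T$; $\mathcal{S}_T$ is the set of successful attacks. A duration vector is $d\in\mathbb{R}_{\ge0}^{N_{\mathtt{BAS}}}$. For an attack $\mathcal{O}=(A,\prec)$, $\mathrm{t}(\mathcal{O},d)=\max_C\sum_{a\in C}d_a$, the maximum over all maximal chains $C$ of $(A,\prec)$ (equal to $0$ if $A=\varnothing$). The min time is $\mathrm{mt}(T,d)=\min_{\mathcal{O}\in\mathcal{S}_T}\mathrm{t}(\mathcal{O},d)$, which is $\infty$ if $\mathcal{S}_T=\varnothing$. *)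

theory Defs
  imports "HOL-Library.Extended_Real"
begin

datatype ntype = BAS | OR | AND | SAND

text \<open>A DAT: node set, root, node types, and ordered list of children of each node
  (the list order is the SAND ordering; for OR/AND it is irrelevant).\<close>
record 'n dat =
  nodes :: "'n set"
  root  :: 'n
  ntyp  :: "'n \<Rightarrow> ntype"
  chl    :: "'n \<Rightarrow> 'n list"

definition edges :: "'n dat \<Rightarrow> ('n \<times> 'n) set" where
  "edges T = {(u, w). u \<in> nodes T \<and> w \<in> set (chl T u)}"

definition is_dat :: "'n dat \<Rightarrow> bool" where
  "is_dat T \<longleftrightarrow> finite (nodes T) \<and> root T \<in> nodes T
     \<and> (\<forall>u\<in>nodes T. set (chl T u) \<subseteq> nodes T \<and> distinct (chl T u))
     \<and> (\<forall>u\<in>nodes T. ntyp T u = BAS \<longleftrightarrow> chl T u = [])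
     \<and> acyclic (edges T)
     \<and> (\<forall>u\<in>nodes T. (root T, u) \<in> (edges T)\<^sup>*)"

definition desc :: "'n dat \<Rightarrow> 'n \<Rightarrow> 'n set" where
  "desc T v = {w. (v, w) \<in> (edges T)\<^sup>*}"

definition subdat :: "'n dat \<Rightarrow> 'n \<Rightarrow> 'n dat" where
  "subdat T v = T\<lparr>nodes := desc T v, root := v\<rparr>"

definition bas :: "'n dat \<Rightarrow> 'n set" where
  "bas T = {u \<in> nodes T. ntyp T u = BAS}"

definition is_module :: "'n dat \<Rightarrow> 'n \<Rightarrow> bool" where
  "is_module T v \<longleftrightarrow> v \<in> nodes T \<and> ntyp T v \<noteq> BAS
     \<and> (\<forall>w \<in> desc T v - {v}. \<forall>u \<in> nodes T. w \<in> set (chl T u) \<longrightarrow> u \<in> desc T v)"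

definition is_attack :: "'n dat \<Rightarrow> 'n set \<times> ('n \<times> 'n) set \<Rightarrow> bool" where
  "is_attack T O' \<longleftrightarrow> fst O' \<subseteq> bas T \<and> snd O' \<subseteq> fst O' \<times> fst O'
     \<and> (\<forall>a. (a, a) \<notin> snd O') \<and> trans (snd O')"

text \<open>Reachability (the recursive definition, as the least fixed point, which on a DAG
  coincides with the recursion).\<close>
inductive reaches :: "'n dat \<Rightarrow> 'n set \<Rightarrow> ('n \<times> 'n) set \<Rightarrow> 'n \<Rightarrow> bool"
  for T A r where
  r_bas: "ntyp T v = BAS \<Longrightarrow> v \<in> A \<Longrightarrow> reaches T A r v"
| r_or: "ntyp T v = OR \<Longrightarrow> w \<in> set (chl T v) \<Longrightarrow> reaches T A r w \<Longrightarrow> reaches T A r v"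
| r_and: "ntyp T v = AND \<Longrightarrow> (\<forall>w\<in>set (chl T v). reaches T A r w) \<Longrightarrow> reaches T A r v"
| r_sand: "ntyp T v = SAND \<Longrightarrow> (\<forall>w\<in>set (chl T v). reaches T A r w) \<Longrightarrow>
     (\<forall>i. Suc i < length (chl T v) \<longrightarrow>
        (\<forall>a \<in> A \<inter> bas (subdat T (chl T v ! i)).
          \<forall>a' \<in> A \<inter> bas (subdat T (chl T v ! Suc i)). (a, a') \<in> r)) \<Longrightarrow>
     reaches T A r v"

definition successful :: "'n dat \<Rightarrow> ('n set \<times> ('n \<times> 'n) set) set" where
  "successful T = {O'. is_attack T O' \<and> reaches T (fst O') (snd O') (root T)}"

definition is_chain :: "'n set \<times> ('n \<times> 'n) set \<Rightarrow> 'n set \<Rightarrow> bool" where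
  "is_chain O' C \<longleftrightarrow> C \<subseteq> fst O' \<and>
     (\<forall>x\<in>C. \<forall>y\<in>C. x \<noteq> y \<longrightarrow> (x, y) \<in> snd O' \<or> (y, x) \<in> snd O')"

definition is_max_chain :: "'n set \<times> ('n \<times> 'n) set \<Rightarrow> 'n set \<Rightarrow> bool" where
  "is_max_chain O' C \<longleftrightarrow> is_chain O' C \<and> (\<forall>C'. is_chain O' C' \<and> C \<subseteq> C' \<longrightarrow> C' = C)"

text \<open>Attack time; durations are extended reals so that an infinite duration
  (arising from d^v) makes every attack containing that BAS take time \<infinity>.\<close>
definition attack_time :: "'n set \<times> ('n \<times> 'n) set \<Rightarrow> ('n \<Rightarrow> ereal) \<Rightarrow> ereal" where
  "attack_time O' d = Sup {(\<Sum>a\<in>C. d a) | C. is_max_chain O' C}"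

definition min_time :: "'n dat \<Rightarrow> ('n \<Rightarrow> ereal) \<Rightarrow> ereal" where
  "min_time T d = Inf {attack_time O' d | O'. O' \<in> successful T}"

definition contract :: "'n dat \<Rightarrow> 'n \<Rightarrow> 'n dat" where
  "contract T v = T\<lparr>nodes := (nodes T - desc T v) \<union> {v},
                     ntyp := (ntyp T)(v := BAS), chl := (chl T)(v := [])\<rparr>"

definition contract_dur :: "'n dat \<Rightarrow> ('n \<Rightarrow> real) \<Rightarrow> 'n \<Rightarrow> 'n \<Rightarrow> ereal" where
  "contract_dur T d v = (\<lambda>a. if a = v then min_time (subdat T v) (\<lambda>b. ereal (d b))
                              else ereal (d a))"

end

theory Submission
  imports Defs
begin

lemma edges_iff: "(u,w) \<in> edges T \<longleftrightarrow> u \<in> nodes T \<and> w \<in> set (chl T u)"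
  by (simp add: edges_def)

lemma desc_refl: "u \<in> desc T u" by (simp add: desc_def)

lemma desc_trans: "w \<in> desc T u \<Longrightarrow> x \<in> desc T w \<Longrightarrow> x \<in> desc T u"
  by (simp add: desc_def)

lemma desc_sub: "w \<in> desc T u \<Longrightarrow> desc T w \<subseteq> desc T u"
  using desc_trans by (metis subsetI)

lemma bas_subdat: "bas (subdat T c) = {u \<in> desc T c. ntyp T u = BAS}"
  by (simp add: bas_def subdat_def)

lemma desc_child: "u \<in> nodes T \<Longrightarrow> c \<in> set (chl T u) \<Longrightarrow> c \<in> desc T u"
  by (auto simp: desc_def edges_def)

lemma desc_nodes: assumes "is_dat T" "u \<in> nodes T" shows "desc T u \<subseteq> nodes T"
proof
  fix w assume "w \<in> desc T u"
  hence "(u,w) \<in> (edges T)\<^sup>*" by (simp add: desc_def)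
  thus "w \<in> nodes T"
  proof (induction rule: rtrancl_induct)
    case base thus ?case using assms by simp
  next
    case (step y z) thus ?case using assms unfolding is_dat_def edges_def by auto
  qed
qed

lemma ex_max_chain:
  assumes "finite (fst O')" "is_chain O' C"
  shows "\<exists>C'. is_max_chain O' C' \<and> C \<subseteq> C'"
proof -
  let ?F = "{C'. is_chain O' C' \<and> C \<subseteq> C'}"
  have "?F \<subseteq> Pow (fst O')" by (auto simp: is_chain_def)
  hence fin: "finite ?F" using assms(1) by (meson finite_Pow_iff finite_subset)
  have "?F \<noteq> {}" using assms(2) by auto
  from finite_has_maximal[OF fin this] obtain m where m: "m \<in> ?F" "\<forall>b\<in>?F. m \<le> b \<longrightarrow> m = b" by blast
  have "is_max_chain O' m" unfolding is_max_chain_def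
  proof (intro conjI allI impI)
    show "is_chain O' m" using m by simp
    fix C' assume "is_chain O' C' \<and> m \<subseteq> C'"
    thus "C' = m" using m by (metis (mono_tags, lifting) mem_Collect_eq order_trans)
  qed
  thus ?thesis using m by blast
qed

lemma chain_le_time:
  fixes d :: "'n \<Rightarrow> ereal"
  assumes "finite (fst O')" "\<forall>a\<in>fst O'. 0 \<le> d a" "is_chain O' C"
  shows "sum d C \<le> attack_time O' d"
proof -
  obtain C' where C': "is_max_chain O' C'" "C \<subseteq> C'" using ex_max_chain[OF assms(1,3)] by blast
  have sub: "C' \<subseteq> fst O'" using C' by (simp add: is_max_chain_def is_chain_def)
  hence "finite C'" using assms(1) finite_subset by blast
  hence "sum d C \<le> sum d C'" using C'(2) sub assms(2) by (intro sum_mono2) auto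
  also have "\<dots> \<le> attack_time O' d" unfolding attack_time_def using C'(1) by (intro Sup_upper) blast
  finally show ?thesis .
qed

lemma time_le:
  fixes d :: "'n \<Rightarrow> ereal"
  assumes "\<And>C. is_max_chain O' C \<Longrightarrow> sum d C \<le> X"
  shows "attack_time O' d \<le> X"
  unfolding attack_time_def using assms by (intro Sup_least) blast

lemma time_attained:
  fixes d :: "'n \<Rightarrow> ereal"
  assumes "finite (fst O')"
  shows "\<exists>C. is_max_chain O' C \<and> attack_time O' d = sum d C"
proof -
  let ?S = "{(\<Sum>a\<in>C. d a) | C. is_max_chain O' C}"
  have "{C. is_max_chain O' C} \<subseteq> Pow (fst O')" by (auto simp: is_max_chain_def is_chain_def)
  hence "finite {C. is_max_chain O' C}" using assms by (meson finite_Pow_iff finite_subset)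
  hence fin: "finite ?S" by (simp add: setcompr_eq_image)
  have "is_chain O' {}" by (simp add: is_chain_def)
  then obtain C0 where "is_max_chain O' C0" using ex_max_chain[OF assms] by blast
  hence ne: "?S \<noteq> {}" by blast
  have "Sup ?S \<in> ?S" using cSup_eq_Max[OF fin ne] Max_in[OF fin ne] by simp
  thus ?thesis unfolding attack_time_def by blast
qed

lemma time_nonneg:
  fixes d :: "'n \<Rightarrow> ereal"
  assumes "finite (fst O')" "\<forall>a\<in>fst O'. 0 \<le> d a"
  shows "0 \<le> attack_time O' d"
  using chain_le_time[OF assms, of "{}"] by (simp add: is_chain_def)

lemma min_time_le: "O' \<in> successful T \<Longrightarrow> min_time T d \<le> attack_time O' d"
  unfolding min_time_def by (intro Inf_lower) blast

lemma min_time_attained: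
  assumes "finite (bas T)" "successful T \<noteq> {}"
  shows "\<exists>O'\<in>successful T. min_time T d = attack_time O' d"
proof -
  have "successful T \<subseteq> Pow (bas T) \<times> Pow (bas T \<times> bas T)"
    by (auto simp: successful_def is_attack_def)
  hence fin0: "finite (successful T)" using assms(1) by (meson finite_Pow_iff finite_SigmaI finite_subset)
  let ?S = "{attack_time O' d | O'. O' \<in> successful T}"
  have "?S = (\<lambda>O'. attack_time O' d) ` successful T" by blast
  hence fin: "finite ?S" using fin0 by simp
  have ne: "?S \<noteq> {}" using assms(2) by blast
  have "Inf ?S \<in> ?S" using cInf_eq_Min[OF fin ne] Min_in[OF fin ne] by simp
  thus ?thesis unfolding min_time_def by blast
qed

lemma min_time_empty: "successful T = {} \<Longrightarrow> min_time T d = \<infinity>"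
  by (simp add: min_time_def top_ereal_def)

locale M =
  fixes T :: "'n dat" and v :: 'n
  assumes dat: "is_dat T" and modu: "is_module T v"
begin

abbreviation "D \<equiv> desc T v"
abbreviation "Tc \<equiv> contract T v"
abbreviation "S \<equiv> subdat T v"

lemma v_nodes: "v \<in> nodes T" using modu by (simp add: is_module_def)
lemma v_D: "v \<in> D" by (rule desc_refl)
lemma D_nodes: "D \<subseteq> nodes T" using desc_nodes[OF dat v_nodes] .
lemma chl_nodes: "u \<in> nodes T \<Longrightarrow> set (chl T u) \<subseteq> nodes T" using dat by (simp add: is_dat_def)
lemma mod_par: assumes "w \<in> D" "w \<noteq> v" "u \<in> nodes T" "w \<in> set (chl T u)" shows "u \<in> D"
proof -
  have "w \<in> D - {v}" using assms by simp
  thus ?thesis using modu assms(3,4) unfolding is_module_def by metis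
qed

lemma nodes_c: "nodes Tc = (nodes T - D) \<union> {v}" by (simp add: contract_def)
lemma ntyp_c: "ntyp Tc = (ntyp T)(v := BAS)" by (simp add: contract_def)
lemma chl_c: "chl Tc = (chl T)(v := [])" by (simp add: contract_def)
lemma root_c: "root Tc = root T" by (simp add: contract_def)
lemma nodes_S: "nodes S = D" by (simp add: subdat_def)
lemma ntyp_S: "ntyp S = ntyp T" by (simp add: subdat_def)
lemma chl_S: "chl S = chl T" by (simp add: subdat_def)
lemma root_S: "root S = v" by (simp add: subdat_def)

lemma edges_c: "(x,y) \<in> edges Tc \<longleftrightarrow> x \<in> nodes T \<and> x \<notin> D \<and> y \<in> set (chl T x)"
  by (cases "x = v") (auto simp: edges_def nodes_c chl_c v_D)

lemma desc_c_sub: "desc Tc c \<subseteq> desc T c"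
proof -
  have "edges Tc \<subseteq> edges T" using edges_c edges_iff[of _ _ T] by auto
  thus ?thesis unfolding desc_def using rtrancl_mono by blast
qed

lemma path_out: assumes "(c,u) \<in> (edges T)\<^sup>*" "u \<notin> D" shows "(c,u) \<in> (edges Tc)\<^sup>*"
  using assms(1)
proof (induction rule: converse_rtrancl_induct)
  case base show ?case by (rule rtrancl_refl)
next
  case (step y z)
  have yz: "y \<in> nodes T" "z \<in> set (chl T y)" using step.hyps(1) by (simp_all add: edges_def)
  have "(y,u) \<in> (edges T)\<^sup>*" using step.hyps(1,2) by (rule converse_rtrancl_into_rtrancl)
  hence "u \<in> desc T y" by (simp add: desc_def)
  hence "y \<notin> D" using desc_sub[of y T v] assms(2) by blast
  hence "(y,z) \<in> edges Tc" using yz by (simp add: edges_c)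
  thus ?case using step.IH by (rule converse_rtrancl_into_rtrancl)
qed

lemma path_in: assumes "(c,x) \<in> (edges T)\<^sup>*" "x \<in> D" shows "c \<notin> D \<Longrightarrow> (c,v) \<in> (edges Tc)\<^sup>*"
  using assms(1)
proof (induction rule: converse_rtrancl_induct)
  case base thus ?case using assms(2) by simp
next
  case (step y z)
  have yn: "y \<in> nodes T" "z \<in> set (chl T y)" using step.hyps(1) by (simp_all add: edges_def)
  show ?case
  proof (cases "z \<in> D")
    case True
    have "z = v"
    proof (rule ccontr)
      assume "z \<noteq> v"
      hence "y \<in> D" using mod_par[OF True _ yn(1) yn(2)] by blast
      thus False using step.prems by blast
    qed
    hence "(y,v) \<in> edges Tc" using yn step.prems by (simp add: edges_c)
    thus ?thesis by (rule r_into_rtrancl)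
  next
    case False
    have "(y,z) \<in> edges Tc" using yn step.prems by (simp add: edges_c)
    thus ?thesis using step.IH[OF False] by (rule converse_rtrancl_into_rtrancl)
  qed
qed

lemma child_c: "y \<in> nodes Tc \<Longrightarrow> y \<noteq> v \<Longrightarrow> z \<in> set (chl T y) \<Longrightarrow> z \<in> nodes Tc"
proof -
  assume a: "y \<in> nodes Tc" "y \<noteq> v" "z \<in> set (chl T y)"
  hence y: "y \<in> nodes T" "y \<notin> D" by (auto simp: nodes_c)
  hence "z \<in> nodes T" using a(3) chl_nodes by blast
  moreover have "z \<in> D \<Longrightarrow> z = v" using mod_par[of z y] y a(3) by blast
  ultimately show ?thesis by (auto simp: nodes_c)
qed

lemma desc_c_closed: "c \<in> nodes Tc \<Longrightarrow> desc Tc c \<subseteq> nodes Tc"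
proof
  fix w assume c: "c \<in> nodes Tc" and "w \<in> desc Tc c"
  hence "(c,w) \<in> (edges Tc)\<^sup>*" by (simp add: desc_def)
  thus "w \<in> nodes Tc"
  proof (induction rule: rtrancl_induct)
    case base thus ?case using c by simp
  next
    case (step y z)
    have "y \<noteq> v" using step(2) v_D by (auto simp: edges_c)
    thus ?case using step child_c by (auto simp: edges_c)
  qed
qed

lemma basc_a: "c \<in> nodes Tc \<Longrightarrow> u \<in> bas (subdat Tc c) \<Longrightarrow> u \<noteq> v \<Longrightarrow> u \<in> bas (subdat T c) \<and> u \<notin> D"
proof -
  assume c: "c \<in> nodes Tc" and u: "u \<in> bas (subdat Tc c)" "u \<noteq> v"
  have "u \<in> desc Tc c" "ntyp T u = BAS" using u by (auto simp: bas_subdat ntyp_c)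
  moreover have "u \<in> nodes Tc" using desc_c_closed[OF c] \<open>u \<in> desc Tc c\<close> by blast
  ultimately show ?thesis using desc_c_sub u(2) by (auto simp: bas_subdat nodes_c)
qed

lemma basc_b: "v \<in> bas (subdat Tc c) \<Longrightarrow> v \<in> desc T c"
  using desc_c_sub by (auto simp: bas_subdat)

lemma basc_c: "u \<in> bas (subdat T c) \<Longrightarrow> u \<notin> D \<Longrightarrow> u \<in> bas (subdat Tc c)"
  using path_out v_D by (auto simp: bas_subdat ntyp_c desc_def)

lemma basc_d: "c \<in> nodes Tc \<Longrightarrow> x \<in> desc T c \<Longrightarrow> x \<in> D \<Longrightarrow> v \<in> bas (subdat Tc c)"
proof -
  assume c: "c \<in> nodes Tc" and x: "x \<in> desc T c" "x \<in> D"
  have "v \<in> desc Tc c"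
  proof (cases "c = v")
    case True thus ?thesis by (simp add: desc_refl)
  next
    case False
    hence "c \<notin> D" using c by (simp add: nodes_c)
    thus ?thesis using path_in x by (simp add: desc_def)
  qed
  thus ?thesis by (simp add: bas_subdat ntyp_c)
qed

lemma desc_S: "c \<in> D \<Longrightarrow> desc S c = desc T c"
proof
  assume c: "c \<in> D"
  have "edges S \<subseteq> edges T" using D_nodes by (auto simp: edges_iff nodes_S chl_S)
  thus "desc S c \<subseteq> desc T c" unfolding desc_def using rtrancl_mono by blast
  show "desc T c \<subseteq> desc S c"
  proof
    fix w assume "w \<in> desc T c"
    hence "(c,w) \<in> (edges T)\<^sup>*" by (simp add: desc_def)
    thus "w \<in> desc S c"
    proof (induction rule: rtrancl_induct)
      case base thus ?case by (simp add: desc_refl)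
    next
      case (step y z)
      have "y \<in> desc T c" using step(1) by (simp add: desc_def)
      hence "y \<in> D" using desc_sub[OF c] by blast
      hence "(y,z) \<in> edges S" using step(2) by (auto simp: edges_iff nodes_S chl_S)
      thus ?case using step(3) by (simp add: desc_def)
    qed
  qed
qed

lemma bas_S: "c \<in> D \<Longrightarrow> bas (subdat S c) = bas (subdat T c)"
  by (simp add: bas_subdat desc_S ntyp_S)

lemma D_child: "w \<in> D \<Longrightarrow> c \<in> set (chl T w) \<Longrightarrow> c \<in> D"
proof -
  assume a: "w \<in> D" "c \<in> set (chl T w)"
  have "w \<in> nodes T" using a(1) D_nodes by blast
  hence "c \<in> desc T w" using a(2) by (rule desc_child)
  thus ?thesis using desc_sub[OF a(1)] by blast
qed

lemma bas_T_D: "c \<in> D \<Longrightarrow> bas (subdat T c) \<subseteq> D"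
  using desc_sub by (fastforce simp: bas_subdat)

lemma bas_nodes: "bas X \<subseteq> nodes X" by (auto simp: bas_def)

lemma L1:
  assumes "reaches T A r w" "w \<in> D"
  shows "reaches S (A \<inter> D) (r \<inter> ((A \<inter> D) \<times> (A \<inter> D))) w"
  using assms
proof (induction rule: reaches.induct)
  case (r_bas w)
  show ?case by (rule reaches.r_bas) (use r_bas in \<open>simp_all add: ntyp_S\<close>)
next
  case (r_or w c)
  have "c \<in> D" using D_child[OF r_or.prems r_or.hyps(2)] .
  hence TH: "reaches S (A \<inter> D) (r \<inter> ((A \<inter> D) \<times> (A \<inter> D))) c" using r_or.IH by blast
  show ?case by (rule reaches.r_or[where w=c]) (use r_or.hyps TH in \<open>simp_all add: ntyp_S chl_S\<close>)
next
  case (r_and w)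
  have TH: "\<forall>c\<in>set (chl T w). reaches S (A \<inter> D) (r \<inter> ((A \<inter> D) \<times> (A \<inter> D))) c"
  proof
    fix c assume c: "c \<in> set (chl T w)"
    hence "c \<in> D" using D_child[OF r_and.prems] by blast
    thus "reaches S (A \<inter> D) (r \<inter> ((A \<inter> D) \<times> (A \<inter> D))) c" using r_and.IH c by blast
  qed
  show ?case by (rule reaches.r_and) (use r_and.hyps TH in \<open>simp_all add: ntyp_S chl_S\<close>)
next
  case (r_sand w)
  have ch: "\<And>i. i < length (chl T w) \<Longrightarrow> chl T w ! i \<in> D"
  proof -
    fix i assume "i < length (chl T w)"
    hence "chl T w ! i \<in> set (chl T w)" by (rule nth_mem)
    thus "chl T w ! i \<in> D" using D_child[OF r_sand.prems] by blast
  qed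
  show ?case
  proof (rule reaches.r_sand)
    show "ntyp S w = SAND" using r_sand.hyps(1) by (simp add: ntyp_S)
    show "\<forall>c\<in>set (chl S w). reaches S (A \<inter> D) (r \<inter> ((A \<inter> D) \<times> (A \<inter> D))) c"
    proof
      fix c assume c: "c \<in> set (chl S w)"
      hence c': "c \<in> set (chl T w)" by (simp add: chl_S)
      hence "c \<in> D" using D_child[OF r_sand.prems] by blast
      thus "reaches S (A \<inter> D) (r \<inter> ((A \<inter> D) \<times> (A \<inter> D))) c" using r_sand.IH c' by blast
    qed
    show "\<forall>i. Suc i < length (chl S w) \<longrightarrow>
      (\<forall>a\<in>A \<inter> D \<inter> bas (subdat S (chl S w ! i)).
          \<forall>a'\<in>A \<inter> D \<inter> bas (subdat S (chl S w ! Suc i)). (a, a') \<in> r \<inter> ((A \<inter> D) \<times> (A \<inter> D)))"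
    proof (intro allI impI ballI)
      fix i a a' assume i: "Suc i < length (chl S w)"
        and a: "a \<in> A \<inter> D \<inter> bas (subdat S (chl S w ! i))"
        and a': "a' \<in> A \<inter> D \<inter> bas (subdat S (chl S w ! Suc i))"
      have i': "Suc i < length (chl T w)" using i by (simp add: chl_S)
      have c: "chl T w ! i \<in> D" "chl T w ! Suc i \<in> D" using i' ch by simp_all
      have "a \<in> A \<inter> bas (subdat T (chl T w ! i))" using a bas_S[OF c(1)] by (simp add: chl_S)
      moreover have "a' \<in> A \<inter> bas (subdat T (chl T w ! Suc i))" using a' bas_S[OF c(2)] by (simp add: chl_S)
      ultimately have "(a,a') \<in> r" using r_sand.hyps(2) i' by blast
      thus "(a, a') \<in> r \<inter> ((A \<inter> D) \<times> (A \<inter> D))" using a a' by blast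
    qed
  qed
qed

lemma L2:
  assumes "reaches S B s w" "w \<in> D" "A2 \<inter> D = B" "s \<subseteq> r2"
  shows "reaches T A2 r2 w"
  using assms
proof (induction rule: reaches.induct)
  case (r_bas w)
  have "w \<in> A2" using r_bas by blast
  thus ?case using r_bas.hyps by (simp add: ntyp_S reaches.r_bas)
next
  case (r_or w c)
  have c': "c \<in> set (chl T w)" using r_or.hyps by (simp add: chl_S)
  have "c \<in> D" using D_child[OF r_or.prems(1) c'] .
  hence TH: "reaches T A2 r2 c" using r_or.IH r_or.prems by blast
  have "ntyp T w = OR" using r_or.hyps by (simp add: ntyp_S)
  thus ?case using c' TH by (rule reaches.r_or)
next
  case (r_and w)
  have TH: "\<forall>c\<in>set (chl T w). reaches T A2 r2 c"
  proof
    fix c assume c: "c \<in> set (chl T w)"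
    hence "c \<in> D" using D_child[OF r_and.prems(1)] by blast
    thus "reaches T A2 r2 c" using r_and.IH r_and.prems c by (auto simp: chl_S)
  qed
  have "ntyp T w = AND" using r_and.hyps by (simp add: ntyp_S)
  thus ?case using TH by (rule reaches.r_and)
next
  case (r_sand w)
  have ch: "\<And>i. i < length (chl T w) \<Longrightarrow> chl T w ! i \<in> D"
  proof -
    fix i assume "i < length (chl T w)"
    hence "chl T w ! i \<in> set (chl T w)" by (rule nth_mem)
    thus "chl T w ! i \<in> D" using D_child[OF r_sand.prems(1)] by blast
  qed
  show ?case
  proof (rule reaches.r_sand)
    show "ntyp T w = SAND" using r_sand.hyps(1) by (simp add: ntyp_S)
    show "\<forall>c\<in>set (chl T w). reaches T A2 r2 c"
    proof
      fix c assume c: "c \<in> set (chl T w)"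
      hence "c \<in> D" using D_child[OF r_sand.prems(1)] by blast
      thus "reaches T A2 r2 c" using r_sand.IH r_sand.prems c by (auto simp: chl_S)
    qed
    show "\<forall>i. Suc i < length (chl T w) \<longrightarrow>
      (\<forall>a\<in>A2 \<inter> bas (subdat T (chl T w ! i)).
          \<forall>a'\<in>A2 \<inter> bas (subdat T (chl T w ! Suc i)). (a, a') \<in> r2)"
    proof (intro allI impI ballI)
      fix i a a' assume i: "Suc i < length (chl T w)"
        and a: "a \<in> A2 \<inter> bas (subdat T (chl T w ! i))"
        and a': "a' \<in> A2 \<inter> bas (subdat T (chl T w ! Suc i))"
      have c: "chl T w ! i \<in> D" "chl T w ! Suc i \<in> D" using i ch by simp_all
      have "a \<in> D" "a' \<in> D" using a a' bas_T_D[OF c(1)] bas_T_D[OF c(2)] by blast+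
      hence "a \<in> B \<inter> bas (subdat S (chl S w ! i))" "a' \<in> B \<inter> bas (subdat S (chl S w ! Suc i))"
        using a a' bas_S[OF c(1)] bas_S[OF c(2)] r_sand.prems(2) by (auto simp: chl_S)
      hence "(a, a') \<in> s" using r_sand.hyps(2) i by (auto simp: chl_S)
      thus "(a, a') \<in> r2" using r_sand.prems(3) by blast
    qed
  qed
qed

lemma nonempty:
  assumes "reaches T A r w" "w \<in> nodes T"
  shows "A \<inter> bas (subdat T w) \<noteq> {}"
  using assms
proof (induction rule: reaches.induct)
  case (r_bas w) thus ?case by (auto simp: bas_subdat desc_refl)
next
  case (r_or w c)
  have "bas (subdat T c) \<subseteq> bas (subdat T w)" using desc_sub[OF desc_child[OF r_or.prems r_or.hyps(2)]]
    by (auto simp: bas_subdat)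
  thus ?case using r_or chl_nodes by blast
next
  case (r_and w)
  have "chl T w \<noteq> []" using r_and dat by (auto simp: is_dat_def)
  then obtain c where c: "c \<in> set (chl T w)" by (cases "chl T w") auto
  have "bas (subdat T c) \<subseteq> bas (subdat T w)" using desc_sub[OF desc_child[OF r_and.prems c]]
    by (auto simp: bas_subdat)
  thus ?case using r_and c chl_nodes by blast
next
  case (r_sand w)
  have "chl T w \<noteq> []" using r_sand dat by (auto simp: is_dat_def)
  then obtain c where c: "c \<in> set (chl T w)" by (cases "chl T w") auto
  have "bas (subdat T c) \<subseteq> bas (subdat T w)" using desc_sub[OF desc_child[OF r_sand.prems c]]
    by (auto simp: bas_subdat)
  thus ?case using r_sand c chl_nodes by blast
qed

lemma ch_out: assumes "w \<in> nodes T" "w \<notin> D" "c \<in> set (chl T w)" shows "c \<in> nodes T \<and> (c = v \<or> c \<notin> D)"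
proof -
  have "c \<in> nodes T" using chl_nodes[OF assms(1)] assms(3) by blast
  moreover have "c = v \<or> c \<notin> D"
  proof (rule ccontr)
    assume "\<not> (c = v \<or> c \<notin> D)"
    hence "w \<in> D" using mod_par[of c w] assms by blast
    thus False using assms(2) by blast
  qed
  ultimately show ?thesis by blast
qed

lemma in_nodes_c: "w \<in> nodes T \<Longrightarrow> w \<notin> D \<Longrightarrow> w \<in> nodes Tc" by (simp add: nodes_c)


context
  fixes A r A' r'
  assumes A: "A \<subseteq> bas T" and irr: "\<forall>a. (a,a) \<notin> r"
  and A'_def: "A' = (A - D) \<union> (if reaches T A r v then {v} else {})"
  and r'_def: "r' = (r \<inter> ((A - D) \<times> (A - D)))
      \<union> {(a,v) | a. a \<in> A - D \<and> v \<in> A' \<and> (\<forall>b\<in>A \<inter> D. (a,b) \<in> r)}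
      \<union> {(v,c) | c. c \<in> A - D \<and> v \<in> A' \<and> (\<forall>b\<in>A \<inter> D. (b,c) \<in> r)}"
begin

lemma Bne: "v \<in> A' \<Longrightarrow> A \<inter> D \<noteq> {}"
proof -
  assume "v \<in> A'"
  hence "reaches T A r v" using A'_def v_D by (auto split: if_splits)
  hence "A \<inter> bas (subdat T v) \<noteq> {}" using nonempty v_nodes by blast
  thus ?thesis using bas_T_D[OF v_D] by blast
qed

lemma subBD: "v \<in> bas (subdat Tc c) \<Longrightarrow> A \<inter> D \<subseteq> A \<inter> bas (subdat T c)"
proof -
  assume "v \<in> bas (subdat Tc c)"
  hence "v \<in> desc T c" by (rule basc_b)
  hence "D \<subseteq> desc T c" by (rule desc_sub)
  moreover have "\<forall>x\<in>A. ntyp T x = BAS" using A by (auto simp: bas_def)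
  ultimately show ?thesis by (auto simp: bas_subdat)
qed

lemma sand_T_c:
  assumes c1: "c1 \<in> nodes Tc" and c2: "c2 \<in> nodes Tc"
  and H: "\<forall>a\<in>A \<inter> bas (subdat T c1). \<forall>a'\<in>A \<inter> bas (subdat T c2). (a,a') \<in> r"
  and x: "x \<in> A' \<inter> bas (subdat Tc c1)" and y: "y \<in> A' \<inter> bas (subdat Tc c2)"
  shows "(x,y) \<in> r'"
proof (cases "x = v")
  case True
  then obtain b where b: "b \<in> A \<inter> D" using Bne x by blast
  have bx: "A \<inter> D \<subseteq> A \<inter> bas (subdat T c1)" using subBD x True by blast
  show ?thesis
  proof (cases "y = v")
    case True
    have "A \<inter> D \<subseteq> A \<inter> bas (subdat T c2)" using subBD y True by blast
    hence "(b,b) \<in> r" using H b bx by blast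
    thus ?thesis using irr by blast
  next
    case False
    have "y \<in> A - D" "y \<in> bas (subdat T c2)" using y False basc_a[OF c2] A'_def by (auto split: if_splits)
    hence "\<forall>b\<in>A \<inter> D. (b,y) \<in> r" using H bx by blast
    thus ?thesis using \<open>y \<in> A - D\<close> True x r'_def by auto
  qed
next
  case False
  have xx: "x \<in> A - D" "x \<in> bas (subdat T c1)" using x False basc_a[OF c1] A'_def by (auto split: if_splits)
  show ?thesis
  proof (cases "y = v")
    case True
    then obtain b where b: "b \<in> A \<inter> D" using Bne y by blast
    have "A \<inter> D \<subseteq> A \<inter> bas (subdat T c2)" using subBD y True by blast
    hence "\<forall>b\<in>A \<inter> D. (x,b) \<in> r" using H xx by blast
    thus ?thesis using xx True y r'_def by auto
  next
    case False
    have "y \<in> A - D" "y \<in> bas (subdat T c2)" using y False basc_a[OF c2] A'_def by (auto split: if_splits)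
    thus ?thesis using H xx r'_def by auto
  qed
qed

lemma Lv: "reaches T A r v \<Longrightarrow> reaches Tc A' r' v"
  by (rule reaches.r_bas) (auto simp: ntyp_c A'_def)

lemma L3:
  assumes "reaches T A r w" "w \<in> nodes T" "w \<notin> D"
  shows "reaches Tc A' r' w"
  using assms
proof (induction rule: reaches.induct)
  case (r_bas w)
  have TH: "w \<noteq> v" using r_bas v_D by blast
  show ?case by (rule reaches.r_bas) (use r_bas TH in \<open>auto simp: ntyp_c A'_def\<close>)
next
  case (r_or w c)
  have "w \<noteq> v" using r_or v_D by blast
  have TH: "reaches Tc A' r' c" using ch_out[OF r_or.prems r_or.hyps(2)] r_or Lv by blast
  show ?case by (rule reaches.r_or[where w=c]) (use r_or \<open>w \<noteq> v\<close> TH in \<open>auto simp: ntyp_c chl_c\<close>)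
next
  case (r_and w)
  have "w \<noteq> v" using r_and v_D by blast
  have TH: "\<forall>c\<in>set (chl T w). reaches Tc A' r' c" using ch_out[OF r_and.prems] r_and Lv by blast
  show ?case by (rule reaches.r_and) (use r_and \<open>w \<noteq> v\<close> TH in \<open>auto simp: ntyp_c chl_c\<close>)
next
  case (r_sand w)
  have wv: "w \<noteq> v" using r_sand v_D by blast
  have chr: "\<forall>c\<in>set (chl T w). reaches Tc A' r' c" using ch_out[OF r_sand.prems] r_sand Lv by blast
  have cn: "\<And>c. c \<in> set (chl T w) \<Longrightarrow> c \<in> nodes Tc"
    using ch_out[OF r_sand.prems] v_nodes by (auto simp: nodes_c)
  show ?case
  proof (rule reaches.r_sand)
    show "ntyp Tc w = SAND" using r_sand wv by (simp add: ntyp_c)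
    show "\<forall>c\<in>set (chl Tc w). reaches Tc A' r' c" using chr wv by (simp add: chl_c)
    show "\<forall>i. Suc i < length (chl Tc w) \<longrightarrow>
      (\<forall>a\<in>A' \<inter> bas (subdat Tc (chl Tc w ! i)).
          \<forall>a'\<in>A' \<inter> bas (subdat Tc (chl Tc w ! Suc i)). (a, a') \<in> r')"
    proof (intro allI impI ballI)
      fix i a a' assume i: "Suc i < length (chl Tc w)"
        and a: "a \<in> A' \<inter> bas (subdat Tc (chl Tc w ! i))"
        and a': "a' \<in> A' \<inter> bas (subdat Tc (chl Tc w ! Suc i))"
      have i': "Suc i < length (chl T w)" using i wv by (simp add: chl_c)
      have c: "chl T w ! i \<in> nodes Tc" "chl T w ! Suc i \<in> nodes Tc" using i' cn by auto
      show "(a, a') \<in> r'"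
        using sand_T_c[OF c] r_sand.hyps(2) i' a a' wv by (auto simp: chl_c)
    qed
  qed
qed

end

context
  fixes A' r' B s A2 r2
  assumes A': "A' \<subseteq> bas Tc" and irr': "\<forall>a. (a,a) \<notin> r'" and BD: "B \<subseteq> D"
  and Bv: "B \<noteq> {} \<Longrightarrow> v \<in> A'" and reachv: "v \<in> A' \<Longrightarrow> reaches T A2 r2 v"
  and A2_def: "A2 = (A' - {v}) \<union> B"
  and r2_def: "r2 = (r' \<inter> ((A' - {v}) \<times> (A' - {v}))) \<union> s
      \<union> {(a,b). a \<in> A' - {v} \<and> (a,v) \<in> r' \<and> b \<in> B}
      \<union> {(b,a). b \<in> B \<and> (v,a) \<in> r' \<and> a \<in> A' - {v}}"
begin

lemma A'D: "x \<in> A' \<Longrightarrow> x \<noteq> v \<Longrightarrow> x \<notin> D"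
  using A' bas_nodes[of Tc] by (auto simp: nodes_c)

lemma phi:
  assumes c: "c \<in> nodes Tc" and x: "x \<in> A2 \<inter> bas (subdat T c)"
  shows "(if x \<in> B then v else x) \<in> A' \<inter> bas (subdat Tc c)"
proof (cases "x \<in> B")
  case True
  hence "v \<in> A'" using Bv by blast
  moreover have "v \<in> bas (subdat Tc c)" using basc_d[OF c, of x] x True BD by (auto simp: bas_subdat)
  ultimately show ?thesis using True by simp
next
  case False
  hence "x \<in> A'" "x \<noteq> v" using x A2_def by auto
  thus ?thesis using A'D basc_c x False by auto
qed

lemma sand_c_T:
  assumes c1: "c1 \<in> nodes Tc" and c2: "c2 \<in> nodes Tc"
  and H: "\<forall>a\<in>A' \<inter> bas (subdat Tc c1). \<forall>a'\<in>A' \<inter> bas (subdat Tc c2). (a,a') \<in> r'"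
  and x: "x \<in> A2 \<inter> bas (subdat T c1)" and y: "y \<in> A2 \<inter> bas (subdat T c2)"
  shows "(x,y) \<in> r2"
proof -
  have r: "((if x \<in> B then v else x), (if y \<in> B then v else y)) \<in> r'"
    using H phi[OF c1 x] phi[OF c2 y] by blast
  have xo: "x \<notin> B \<Longrightarrow> x \<in> A' - {v}" and yo: "y \<notin> B \<Longrightarrow> y \<in> A' - {v}" using x y A2_def by auto
  show ?thesis
  proof (cases "x \<in> B"; cases "y \<in> B")
    assume "x \<in> B" "y \<in> B" thus ?thesis using r irr' by simp
  next
    assume "x \<in> B" "y \<notin> B" thus ?thesis using r yo r2_def by auto
  next
    assume "x \<notin> B" "y \<in> B" thus ?thesis using r xo r2_def by auto
  next
    assume "x \<notin> B" "y \<notin> B" thus ?thesis using r xo yo r2_def by auto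
  qed
qed

lemma L4:
  assumes "reaches Tc A' r' w" "w \<in> nodes Tc"
  shows "reaches T A2 r2 w"
  using assms
proof (induction rule: reaches.induct)
  case (r_bas w)
  show ?case
  proof (cases "w = v")
    case True thus ?thesis using reachv r_bas by blast
  next
    case False show ?thesis by (rule reaches.r_bas) (use r_bas False in \<open>auto simp: ntyp_c A2_def\<close>)
  qed
next
  case (r_or w c)
  have wv: "w \<noteq> v" using r_or by (auto simp: ntyp_c)
  have TH: "c \<in> nodes Tc" using child_c r_or wv by (auto simp: chl_c)
  show ?case by (rule reaches.r_or[where w=c]) (use r_or wv TH in \<open>auto simp: ntyp_c chl_c\<close>)
next
  case (r_and w)
  have wv: "w \<noteq> v" using r_and by (auto simp: ntyp_c)
  have TH: "\<forall>c\<in>set (chl T w). c \<in> nodes Tc" using child_c r_and wv by blast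
  show ?case by (rule reaches.r_and) (use r_and wv TH in \<open>auto simp: ntyp_c chl_c\<close>)
next
  case (r_sand w)
  have wv: "w \<noteq> v" using r_sand by (auto simp: ntyp_c)
  have cn: "\<forall>c\<in>set (chl T w). c \<in> nodes Tc" using child_c r_sand wv by blast
  show ?case
  proof (rule reaches.r_sand)
    show "ntyp T w = SAND" using r_sand wv by (simp add: ntyp_c)
    show "\<forall>c\<in>set (chl T w). reaches T A2 r2 c" using r_sand cn wv by (auto simp: chl_c)
    show "\<forall>i. Suc i < length (chl T w) \<longrightarrow>
      (\<forall>a\<in>A2 \<inter> bas (subdat T (chl T w ! i)).
          \<forall>a'\<in>A2 \<inter> bas (subdat T (chl T w ! Suc i)). (a, a') \<in> r2)"
    proof (intro allI impI ballI)
      fix i a a' assume i: "Suc i < length (chl T w)"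
        and a: "a \<in> A2 \<inter> bas (subdat T (chl T w ! i))"
        and a': "a' \<in> A2 \<inter> bas (subdat T (chl T w ! Suc i))"
      have c: "chl T w ! i \<in> nodes Tc" "chl T w ! Suc i \<in> nodes Tc" using i cn by auto
      show "(a, a') \<in> r2"
        using sand_c_T[OF c _ a a'] r_sand.hyps(2) i wv by (auto simp: chl_c)
    qed
  qed
qed

end

lemma fin_T: "finite (bas T)"
proof -
  have "finite (nodes T)" using dat by (simp add: is_dat_def)
  thus ?thesis using bas_nodes[of T] finite_subset by blast
qed

lemma bas_S_sub: "bas S \<subseteq> bas T" "bas S = {u \<in> D. ntyp T u = BAS}"
  using D_nodes by (auto simp: bas_def nodes_S ntyp_S)

lemma bas_c_iff: "x \<in> bas Tc \<longleftrightarrow> x = v \<or> (x \<in> bas T \<and> x \<notin> D)"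
  using v_nodes v_D by (auto simp: bas_def nodes_c ntyp_c)

lemma root_ok: "root T \<in> nodes T \<and> (root T = v \<or> root T \<notin> D)"
proof -
  have rn: "root T \<in> nodes T" using dat by (simp add: is_dat_def)
  have "root T = v" if "root T \<in> D"
  proof (rule ccontr)
    assume ne: "root T \<noteq> v"
    have "(root T, v) \<in> (edges T)\<^sup>*" using dat v_nodes by (simp add: is_dat_def)
    hence "(root T, v) \<in> (edges T)\<^sup>+" using ne by (meson rtranclD)
    moreover have "(v, root T) \<in> (edges T)\<^sup>*" using that by (simp add: desc_def)
    ultimately have "(root T, root T) \<in> (edges T)\<^sup>+" by (rule trancl_rtrancl_trancl)
    moreover have "acyclic (edges T)" using dat by (simp add: is_dat_def)
    ultimately show False by (simp add: acyclic_def)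
  qed
  thus ?thesis using rn by blast
qed

lemma succ_iff: "(A, r) \<in> successful X \<longleftrightarrow> A \<subseteq> bas X \<and> r \<subseteq> A \<times> A \<and> (\<forall>a. (a,a) \<notin> r) \<and> trans r \<and> reaches X A r (root X)"
  by (simp add: successful_def is_attack_def)

lemma min_time_S_nonneg:
  assumes nn: "\<forall>a\<in>bas T. 0 \<le> d a"
  shows "0 \<le> min_time S (\<lambda>b. ereal (d b))"
  unfolding min_time_def
proof (rule Inf_greatest)
  fix x assume "x \<in> {attack_time O' (\<lambda>b. ereal (d b)) |O'. O' \<in> successful S}"
  then obtain B s where Bs: "(B,s) \<in> successful S" "x = attack_time (B,s) (\<lambda>b. ereal (d b))" by auto
  have "B \<subseteq> bas T" using Bs(1) bas_S_sub(1) by (auto simp: succ_iff)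
  hence "finite B" using fin_T finite_subset by blast
  moreover have "\<forall>a\<in>B. 0 \<le> ereal (d a)" using \<open>B \<subseteq> bas T\<close> nn by auto
  ultimately show "0 \<le> x" using time_nonneg[of "(B,s)"] Bs(2) by simp
qed

lemma GE:
  assumes nn: "\<forall>a\<in>bas T. 0 \<le> d a" and O: "(A,r) \<in> successful T"
  shows "min_time Tc (contract_dur T d v) \<le> attack_time (A,r) (\<lambda>a. ereal (d a))"
proof -
  let ?de = "\<lambda>a. ereal (d a)"
  let ?dv = "contract_dur T d v"
  have A: "A \<subseteq> bas T" and rA: "r \<subseteq> A \<times> A" and irr: "\<forall>a. (a,a) \<notin> r" and tr: "trans r"
    and reach: "reaches T A r (root T)" using O by (simp_all add: succ_iff)
  define A' where "A' = (A - D) \<union> (if reaches T A r v then {v} else {})"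
  define r' where "r' = (r \<inter> ((A - D) \<times> (A - D)))
      \<union> {(a,v) | a. a \<in> A - D \<and> v \<in> A' \<and> (\<forall>b\<in>A \<inter> D. (a,b) \<in> r)}
      \<union> {(v,c) | c. c \<in> A - D \<and> v \<in> A' \<and> (\<forall>b\<in>A \<inter> D. (b,c) \<in> r)}"
  note ctx = A irr A'_def r'_def
  have trr: "\<And>x y z. (x,y) \<in> r \<Longrightarrow> (y,z) \<in> r \<Longrightarrow> (x,z) \<in> r" using tr by (meson transD)
  have Bne: "v \<in> A' \<Longrightarrow> A \<inter> D \<noteq> {}" by (rule Bne[OF ctx])
  have vD: "v \<in> D" by (rule v_D)
  have A'c: "A' \<subseteq> bas Tc" using A by (auto simp: A'_def bas_c_iff split: if_splits)
  have r'sub: "r' \<subseteq> A' \<times> A'" by (auto simp: r'_def A'_def)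
  have irr': "\<forall>a. (a,a) \<notin> r'" using irr vD by (auto simp: r'_def)
  have tr': "trans r'"
  proof (rule transI)
    fix x y z assume xy: "(x,y) \<in> r'" and yz: "(y,z) \<in> r'"
    show "(x,z) \<in> r'"
    proof (cases "x = v")
      case True
      hence y: "y \<in> A - D" "v \<in> A'" "\<forall>b\<in>A \<inter> D. (b,y) \<in> r" using xy vD by (auto simp: r'_def)
      show ?thesis
      proof (cases "z = v")
        case True
        hence "\<forall>b\<in>A \<inter> D. (y,b) \<in> r" using yz y vD by (auto simp: r'_def)
        moreover obtain b where "b \<in> A \<inter> D" using Bne y(2) by blast
        ultimately have "(b,b) \<in> r" using y(3) trr by blast
        thus ?thesis using irr by blast
      next
        case False
        hence "(y,z) \<in> r \<and> z \<in> A - D" using yz y vD by (auto simp: r'_def)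
        thus ?thesis using True y trr by (auto simp: r'_def)
      qed
    next
      case False
      hence x: "x \<in> A - D" using xy by (auto simp: r'_def)
      show ?thesis
      proof (cases "y = v")
        case True
        hence xb: "\<forall>b\<in>A \<inter> D. (x,b) \<in> r" "v \<in> A'" using xy False vD by (auto simp: r'_def)
        have z: "z \<in> A - D" "\<forall>b\<in>A \<inter> D. (b,z) \<in> r" using yz True vD by (auto simp: r'_def)
        obtain b where "b \<in> A \<inter> D" using Bne xb(2) by blast
        hence "(x,z) \<in> r" using xb z trr by blast
        thus ?thesis using x z by (auto simp: r'_def)
      next
        case yv: False
        hence xyr: "(x,y) \<in> r" "y \<in> A - D" using xy False by (auto simp: r'_def)
        show ?thesis
        proof (cases "z = v")
          case True
          hence "\<forall>b\<in>A \<inter> D. (y,b) \<in> r" "v \<in> A'" using yz yv vD by (auto simp: r'_def)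
          thus ?thesis using True x xyr trr by (auto simp: r'_def)
        next
          case False
          hence "(y,z) \<in> r" "z \<in> A - D" using yz yv by (auto simp: r'_def)
          thus ?thesis using x xyr trr by (auto simp: r'_def)
        qed
      qed
    qed
  qed
  have reach': "reaches Tc A' r' (root Tc)"
  proof (cases "root T = v")
    case True
    thus ?thesis using Lv[OF ctx] reach by (simp add: root_c)
  next
    case False
    thus ?thesis using L3[OF ctx reach] root_ok by (simp add: root_c)
  qed
  have succ': "(A',r') \<in> successful Tc" using A'c r'sub irr' tr' reach' by (simp add: succ_iff)
  have finA: "finite A" using A fin_T finite_subset by blast
  have nnA: "\<forall>a\<in>fst (A,r). 0 \<le> ?de a" using A nn by auto
  have r'r: "\<And>x y. (x,y) \<in> r' \<Longrightarrow> x \<noteq> v \<Longrightarrow> y \<noteq> v \<Longrightarrow> (x,y) \<in> r" by (auto simp: r'_def)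
  have "min_time Tc ?dv \<le> attack_time (A',r') ?dv" using succ' by (rule min_time_le)
  also have "\<dots> \<le> attack_time (A,r) ?de"
  proof (rule time_le)
    fix C' assume C': "is_max_chain (A',r') C'"
    hence ch: "C' \<subseteq> A'" "\<forall>x\<in>C'. \<forall>y\<in>C'. x \<noteq> y \<longrightarrow> (x,y) \<in> r' \<or> (y,x) \<in> r'"
      by (simp_all add: is_max_chain_def is_chain_def)
    have finC': "finite C'" using ch(1) finA finite_subset[of C' "insert v A"] by (auto simp: A'_def split: if_splits)
    show "sum ?dv C' \<le> attack_time (A,r) ?de"
    proof (cases "v \<in> C'")
      case False
      have CA: "C' \<subseteq> A" using ch(1) False by (auto simp: A'_def split: if_splits)
      have "is_chain (A,r) C'" unfolding is_chain_def
      proof (intro conjI ballI impI)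
        show "C' \<subseteq> fst (A,r)" using CA by simp
        fix x y assume "x \<in> C'" "y \<in> C'" "x \<noteq> y"
        moreover hence "x \<noteq> v" "y \<noteq> v" using False by blast+
        ultimately show "(x, y) \<in> snd (A,r) \<or> (y, x) \<in> snd (A,r)" using ch(2) r'r by (metis snd_conv)
      qed
      hence "sum ?de C' \<le> attack_time (A,r) ?de" using chain_le_time[OF _ nnA] finA by simp
      moreover have "sum ?dv C' = sum ?de C'" using False by (intro sum.cong) (auto simp: contract_dur_def)
      ultimately show ?thesis by simp
    next
      case True
      have vA': "v \<in> A'" using True ch(1) by blast
      hence rv: "reaches T A r v" using vD by (auto simp: A'_def split: if_splits)
      let ?B = "A \<inter> D"
      let ?OB = "(?B, r \<inter> (?B \<times> ?B))"
      have "\<forall>x\<in>A. ntyp T x = BAS" using A by (auto simp: bas_def)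
      hence "?B \<subseteq> bas S" by (auto simp: bas_S_sub(2))
      moreover have "trans (r \<inter> (?B \<times> ?B))" using trr by (auto simp: trans_def)
      moreover have "reaches S ?B (r \<inter> (?B \<times> ?B)) (root S)" using L1[OF rv vD] by (simp add: root_S)
      ultimately have OB: "?OB \<in> successful S" using irr by (simp add: succ_iff)
      have finB: "finite (fst ?OB)" using finA by simp
      obtain CB where CB: "is_max_chain ?OB CB" "attack_time ?OB ?de = sum ?de CB"
        using time_attained[OF finB] by blast
      have CBsub: "CB \<subseteq> ?B" and CBch: "\<forall>x\<in>CB. \<forall>y\<in>CB. x \<noteq> y \<longrightarrow> (x,y) \<in> r \<or> (y,x) \<in> r"
        using CB(1) by (auto simp: is_max_chain_def is_chain_def)
      have "?dv v = min_time S ?de" by (simp add: contract_dur_def)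
      also have "\<dots> \<le> attack_time ?OB ?de" using OB by (rule min_time_le)
      finally have mt: "?dv v \<le> sum ?de CB" using CB(2) by simp
      let ?C1 = "C' - {v}"
      have C1A: "?C1 \<subseteq> A - D" using ch(1) by (auto simp: A'_def split: if_splits)
      have rel1: "\<And>x. x \<in> ?C1 \<Longrightarrow> (\<forall>b\<in>?B. (x,b) \<in> r) \<or> (\<forall>b\<in>?B. (b,x) \<in> r)"
      proof -
        fix x assume x: "x \<in> ?C1"
        hence "(x,v) \<in> r' \<or> (v,x) \<in> r'" using ch(2) True by blast
        thus "(\<forall>b\<in>?B. (x,b) \<in> r) \<or> (\<forall>b\<in>?B. (b,x) \<in> r)" using x vD by (auto simp: r'_def)
      qed
      have chainC: "is_chain (A,r) (?C1 \<union> CB)"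
        unfolding is_chain_def
      proof (intro conjI ballI impI)
        show "?C1 \<union> CB \<subseteq> fst (A,r)" using C1A CBsub by auto
        fix x y assume x: "x \<in> ?C1 \<union> CB" and y: "y \<in> ?C1 \<union> CB" and xy: "x \<noteq> y"
        show "(x, y) \<in> snd (A,r) \<or> (y, x) \<in> snd (A,r)"
        proof (cases "x \<in> CB")
          case xB: True
          show ?thesis
          proof (cases "y \<in> CB")
            case True thus ?thesis using xB CBch xy by simp
          next
            case False
            hence "y \<in> ?C1" using y by blast
            thus ?thesis using rel1 xB CBsub by fastforce
          qed
        next
          case xB: False
          hence x1: "x \<in> ?C1" using x by blast
          show ?thesis
          proof (cases "y \<in> CB")
            case True thus ?thesis using rel1[OF x1] CBsub by fastforce
          next
            case False
            hence "y \<in> ?C1" using y by blast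
            thus ?thesis using x1 ch(2) r'r xy by auto
          qed
        qed
      qed
      have disj: "?C1 \<inter> CB = {}" using C1A CBsub by blast
      have finCB: "finite CB" using CBsub finA finite_subset by blast
      have "sum ?dv C' = ?dv v + sum ?dv ?C1" using finC' True by (simp add: sum.remove)
      also have "sum ?dv ?C1 = sum ?de ?C1" by (intro sum.cong) (auto simp: contract_dur_def)
      also have "?dv v + sum ?de ?C1 \<le> sum ?de CB + sum ?de ?C1" using mt by (rule add_right_mono)
      also have "\<dots> = sum ?de (?C1 \<union> CB)" using finC' finCB disj by (simp add: sum.union_disjoint add.commute)
      also have "\<dots> \<le> attack_time (A,r) ?de" using chain_le_time[OF _ nnA chainC] finA by simp
      finally show ?thesis .
    qed
  qed
  finally show ?thesis .
qed

lemma LE: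
  assumes nn: "\<forall>a\<in>bas T. 0 \<le> d a" and O': "(A',r') \<in> successful Tc"
  shows "min_time T (\<lambda>a. ereal (d a)) \<le> attack_time (A',r') (contract_dur T d v)"
proof -
  let ?de = "\<lambda>a. ereal (d a)"
  let ?dv = "contract_dur T d v"
  have A'c: "A' \<subseteq> bas Tc" and r'sub: "r' \<subseteq> A' \<times> A'" and irr': "\<forall>a. (a,a) \<notin> r'" and tr': "trans r'"
    and reach': "reaches Tc A' r' (root Tc)" using O' by (simp_all add: succ_iff)
  have trr': "\<And>x y z. (x,y) \<in> r' \<Longrightarrow> (y,z) \<in> r' \<Longrightarrow> (x,z) \<in> r'" using tr' by (meson transD)
  have vD: "v \<in> D" by (rule v_D)
  have A'v: "\<And>x. x \<in> A' \<Longrightarrow> x \<noteq> v \<Longrightarrow> x \<in> bas T \<and> x \<notin> D" using A'c bas_c_iff by blast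
  have finA': "finite A'"
  proof -
    have "A' \<subseteq> insert v (bas T)" using A'v by blast
    thus ?thesis using fin_T finite_subset by blast
  qed
  have nnv: "\<forall>a\<in>fst (A',r'). 0 \<le> ?dv a"
  proof
    fix a assume a: "a \<in> fst (A',r')"
    show "0 \<le> ?dv a"
    proof (cases "a = v")
      case True thus ?thesis using min_time_S_nonneg[OF nn] by (simp add: contract_dur_def)
    next
      case False thus ?thesis using A'v[of a] a nn by (simp add: contract_dur_def)
    qed
  qed
  show ?thesis
  proof (cases "v \<in> A' \<and> successful S = {}")
    case True
    have chv: "is_chain (A',r') {v}" using True by (simp add: is_chain_def)
    have finf: "finite (fst (A',r'))" using finA' by simp
    have "sum ?dv {v} \<le> attack_time (A',r') ?dv" by (rule chain_le_time[OF finf nnv chv])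
    moreover have "?dv v = \<infinity>" using True min_time_empty[of S ?de] by (simp add: contract_dur_def)
    ultimately have "attack_time (A',r') ?dv = \<infinity>" by simp
    thus ?thesis by simp
  next
    case False
    obtain B s where Bs: "v \<in> A' \<Longrightarrow> (B,s) \<in> successful S \<and> attack_time (B,s) ?de = ?dv v"
      and Bs2: "v \<notin> A' \<Longrightarrow> B = {} \<and> s = {}"
    proof (cases "v \<in> A'")
      case True
      hence ne: "successful S \<noteq> {}" using False by blast
      have "finite (bas S)" using fin_T bas_S_sub(1) finite_subset by blast
      then obtain OB where "OB \<in> successful S" "min_time S ?de = attack_time OB ?de"
        using min_time_attained[OF _ ne] by blast
      thus ?thesis using that[of "fst OB" "snd OB"] True by (simp add: contract_dur_def)
    next
      case False thus ?thesis using that[of "{}" "{}"] by simp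
    qed
    have Bprops: "B \<subseteq> D \<and> B \<subseteq> bas T \<and> s \<subseteq> B \<times> B \<and> (\<forall>a. (a,a) \<notin> s) \<and> trans s"
    proof (cases "v \<in> A'")
      case True
      hence "(B,s) \<in> successful S" using Bs by blast
      thus ?thesis using bas_S_sub by (auto simp: succ_iff)
    next
      case False thus ?thesis using Bs2 by (simp add: trans_def)
    qed
    hence BD: "B \<subseteq> D" and BT: "B \<subseteq> bas T" and sB: "s \<subseteq> B \<times> B" and irrs: "\<forall>a. (a,a) \<notin> s"
      and trs: "\<And>x y z. (x,y) \<in> s \<Longrightarrow> (y,z) \<in> s \<Longrightarrow> (x,z) \<in> s" by (auto dest: transD)
    have Bv: "B \<noteq> {} \<Longrightarrow> v \<in> A'" using Bs2 by blast
    define A2 where "A2 = (A' - {v}) \<union> B"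
    define r2 where "r2 = (r' \<inter> ((A' - {v}) \<times> (A' - {v}))) \<union> s
      \<union> {(a,b). a \<in> A' - {v} \<and> (a,v) \<in> r' \<and> b \<in> B}
      \<union> {(b,a). b \<in> B \<and> (v,a) \<in> r' \<and> a \<in> A' - {v}}"
    have disj: "\<And>x. x \<in> B \<Longrightarrow> x \<in> A' - {v} \<Longrightarrow> False" using A'v BD by blast
    have reachv: "v \<in> A' \<Longrightarrow> reaches T A2 r2 v"
    proof -
      assume vA: "v \<in> A'"
      hence "reaches S B s (root S)" using Bs by (simp add: succ_iff)
      hence rS: "reaches S B s v" by (simp add: root_S)
      have "A2 \<inter> D = B" using BD A'v by (auto simp: A2_def)
      moreover have "s \<subseteq> r2" by (auto simp: r2_def)
      ultimately show ?thesis using L2[OF rS vD] by blast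
    qed
    note ctx2 = A'c irr' BD Bv reachv A2_def r2_def
    have A2T: "A2 \<subseteq> bas T" using A'v BT by (auto simp: A2_def)
    have r2sub: "r2 \<subseteq> A2 \<times> A2" using r'sub sB by (auto simp: r2_def A2_def)
    have irr2: "\<forall>a. (a,a) \<notin> r2" using irr' irrs disj by (auto simp: r2_def)
    have tr2: "trans r2"
    proof (rule transI)
      fix x y z assume xy: "(x,y) \<in> r2" and yz: "(y,z) \<in> r2"
      show "(x,z) \<in> r2"
        using xy yz trr' trs disj irr' sB unfolding r2_def by blast
    qed
    have rootc: "root T \<in> nodes Tc" using root_ok by (auto simp: nodes_c)
    have reach2: "reaches T A2 r2 (root T)" using L4[OF ctx2 reach'] rootc by (simp add: root_c)
    have succ2: "(A2,r2) \<in> successful T" using A2T r2sub irr2 tr2 reach2 by (simp add: succ_iff)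
    have "min_time T ?de \<le> attack_time (A2,r2) ?de" using succ2 by (rule min_time_le)
    also have "\<dots> \<le> attack_time (A',r') ?dv"
    proof (rule time_le)
      fix C assume C: "is_max_chain (A2,r2) C"
      hence ch: "C \<subseteq> A2" "\<forall>x\<in>C. \<forall>y\<in>C. x \<noteq> y \<longrightarrow> (x,y) \<in> r2 \<or> (y,x) \<in> r2"
        by (simp_all add: is_max_chain_def is_chain_def)
      let ?P = "A' - {v}"
      have pa: "\<And>x y. x \<in> ?P \<Longrightarrow> y \<in> ?P \<Longrightarrow> (x,y) \<in> r2 \<Longrightarrow> (x,y) \<in> r'"
        using disj sB unfolding r2_def by blast
      have pb: "\<And>x y. x \<in> B \<Longrightarrow> y \<in> B \<Longrightarrow> (x,y) \<in> r2 \<Longrightarrow> (x,y) \<in> s"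
        using disj sB unfolding r2_def by blast
      have pc: "\<And>x b. x \<in> ?P \<Longrightarrow> b \<in> B \<Longrightarrow> (x,b) \<in> r2 \<Longrightarrow> (x,v) \<in> r'"
        using disj sB unfolding r2_def by blast
      have pd: "\<And>x b. x \<in> ?P \<Longrightarrow> b \<in> B \<Longrightarrow> (b,x) \<in> r2 \<Longrightarrow> (v,x) \<in> r'"
        using disj sB unfolding r2_def by blast
      let ?C1 = "C - B"
      let ?C2 = "C \<inter> B"
      have C1P: "?C1 \<subseteq> ?P" using ch(1) by (auto simp: A2_def)
      have finA2: "finite A2" using A2T fin_T finite_subset by blast
      have finC: "finite C" using ch(1) finA2 finite_subset by blast
      have nv1: "v \<notin> ?C1" using C1P by blast
      have eq1: "sum ?de ?C1 = sum ?dv ?C1" using nv1 by (intro sum.cong) (auto simp: contract_dur_def)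
      show "sum ?de C \<le> attack_time (A',r') ?dv"
      proof (cases "?C2 = {}")
        case True
        hence CC1: "C = ?C1" by blast
        have "is_chain (A',r') ?C1" unfolding is_chain_def
        proof (intro conjI ballI impI)
          show "?C1 \<subseteq> fst (A',r')" using C1P by auto
          fix x y assume "x \<in> ?C1" "y \<in> ?C1" "x \<noteq> y"
          thus "(x,y) \<in> snd (A',r') \<or> (y,x) \<in> snd (A',r')" using ch(2) pa C1P by (metis DiffD1 snd_conv subsetD)
        qed
        hence "sum ?dv ?C1 \<le> attack_time (A',r') ?dv" using chain_le_time[OF _ nnv] finA' by simp
        thus ?thesis using eq1 CC1 by simp
      next
        case False
        then obtain b0 where b0: "b0 \<in> ?C2" by blast
        have vA: "v \<in> A'" using Bv b0 by blast
        have chB: "is_chain (B,s) ?C2" unfolding is_chain_def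
        proof (intro conjI ballI impI)
          show "?C2 \<subseteq> fst (B,s)" by auto
          fix x y assume "x \<in> ?C2" "y \<in> ?C2" "x \<noteq> y"
          thus "(x,y) \<in> snd (B,s) \<or> (y,x) \<in> snd (B,s)" using ch(2) pb by (metis IntD1 IntD2 snd_conv)
        qed
        have finB: "finite B" using BT fin_T finite_subset by blast
        have nnB: "\<forall>a\<in>fst (B,s). 0 \<le> ?de a" using BT nn by auto
        have "sum ?de ?C2 \<le> attack_time (B,s) ?de" using chain_le_time[OF _ nnB chB] finB by simp
        hence m2: "sum ?de ?C2 \<le> ?dv v" using Bs vA by simp
        have chC': "is_chain (A',r') (insert v ?C1)" unfolding is_chain_def
        proof (intro conjI ballI impI)
          show "insert v ?C1 \<subseteq> fst (A',r')" using C1P vA by auto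
          fix x y assume x: "x \<in> insert v ?C1" and y: "y \<in> insert v ?C1" and xy: "x \<noteq> y"
          have b0B: "b0 \<in> B" "b0 \<in> C" using b0 by auto
          show "(x,y) \<in> snd (A',r') \<or> (y,x) \<in> snd (A',r')"
          proof (cases "x = v")
            case True
            hence y1: "y \<in> ?C1" "y \<in> ?P" using y xy C1P by auto
            have "y \<noteq> b0" using y1 b0B by blast
            hence "(y,b0) \<in> r2 \<or> (b0,y) \<in> r2" using ch(2) y1(1) b0B by blast
            thus ?thesis using pc[OF y1(2) b0B(1)] pd[OF y1(2) b0B(1)] True by auto
          next
            case xv: False
            hence x1: "x \<in> ?C1" "x \<in> ?P" using x C1P by auto
            show ?thesis
            proof (cases "y = v")
              case True
              have "x \<noteq> b0" using x1 b0B by blast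
              hence "(x,b0) \<in> r2 \<or> (b0,x) \<in> r2" using ch(2) x1(1) b0B by blast
              thus ?thesis using pc[OF x1(2) b0B(1)] pd[OF x1(2) b0B(1)] True by auto
            next
              case False
              hence y1: "y \<in> ?C1" "y \<in> ?P" using y C1P by auto
              hence "(x,y) \<in> r2 \<or> (y,x) \<in> r2" using ch(2) x1(1) xy by blast
              thus ?thesis using pa[OF x1(2) y1(2)] pa[OF y1(2) x1(2)] by auto
            qed
          qed
        qed
        have "sum ?de C = sum ?de ?C1 + sum ?de ?C2"
        proof -
          have "C = ?C1 \<union> ?C2" by blast
          moreover have "?C1 \<inter> ?C2 = {}" by blast
          ultimately show ?thesis using finC by (metis finite_Int finite_Diff sum.union_disjoint)
        qed
        also have "\<dots> \<le> sum ?dv ?C1 + ?dv v" using eq1 m2 by (simp add: add_left_mono)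
        also have "\<dots> = sum ?dv (insert v ?C1)" using finC nv1 by (simp add: add.commute)
        also have "\<dots> \<le> attack_time (A',r') ?dv" using chain_le_time[OF _ nnv chC'] finA' by simp
        finally show ?thesis .
      qed
    qed
    finally show ?thesis .
  qed
qed

end

theorem mainTheorem9:
  fixes T :: "'n dat" and d :: "'n \<Rightarrow> real" and v :: 'n
  assumes "is_dat T"
    and "\<forall>a\<in>bas T. d a \<ge> 0"
    and "is_module T v"
  shows "min_time T (\<lambda>a. ereal (d a)) = min_time (contract T v) (contract_dur T d v)"
proof -
  interpret M T v using assms(1,3) by unfold_locales
  show ?thesis
  proof (rule antisym)
    show "min_time T (\<lambda>a. ereal (d a)) \<le> min_time (contract T v) (contract_dur T d v)"
      unfolding min_time_def[of "contract T v"]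
    proof (rule Inf_greatest)
      fix x assume "x \<in> {attack_time O' (contract_dur T d v) |O'. O' \<in> successful (contract T v)}"
      then obtain A' r' where "(A',r') \<in> successful (contract T v)" "x = attack_time (A',r') (contract_dur T d v)"
        by auto
      thus "min_time T (\<lambda>a. ereal (d a)) \<le> x" using LE[OF assms(2)] by simp
    qed
    show "min_time (contract T v) (contract_dur T d v) \<le> min_time T (\<lambda>a. ereal (d a))"
      unfolding min_time_def[of T]
    proof (rule Inf_greatest)
      fix x assume "x \<in> {attack_time O' (\<lambda>a. ereal (d a)) |O'. O' \<in> successful T}"
      then obtain A r where "(A,r) \<in> successful T" "x = attack_time (A,r) (\<lambda>a. ereal (d a))"
        by auto
      thus "min_time (contract T v) (contract_dur T d v) \<le> x" using GE[OF assms(2)] by simp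
    qed
  qed
qed

end
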